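(* Let $\alpha_1,\dots,\alpha_n$ be PL arcs in the plane with a common endpoint $z$ such that $\alpha_i\cap\alpha_j$ is connected for all $i,j$. Then $\bigcup_{i=1}^n\alpha_i$ is a tree.
   Context: A set $X\subset\mathbb{R}^2$ is a tree if it is connected, simply connected, and homeomorphic to a union of finitely many straight line segments. *)

theory Defs
  imports "HOL-Analysis.Analysis"
begin

fun polygonal_path :: "'a::real_normed_vector list \<Rightarrow> real \<Rightarrow> 'a" where
  "polygonal_path [] = linepath 0 0"
| "polygonal_path [a] = linepath a a"
| "polygonal_path [a, b] = linepath a b"
| "polygonal_path (a # b # c # xs) = linepath a b +++ polygonal_path (b # c # xs)"

definition pl_arc_path :: "(real \<Rightarrow> real^2) \<Rightarrow> bool" where
  "pl_arc_path g \<longleftrightarrow> arc g \<and> (\<exists>ps. length ps \<ge> 2 \<and> g = polygonal_path ps)"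

definition pl_arc_with_endpoint :: "(real^2) set \<Rightarrow> real^2 \<Rightarrow> bool" where
  "pl_arc_with_endpoint A z \<longleftrightarrow>
     (\<exists>g. pl_arc_path g \<and> path_image g = A \<and> z \<in> {pathstart g, pathfinish g})"

definition is_tree :: "(real^2) set \<Rightarrow> bool" where
  "is_tree X \<longleftrightarrow> connected X \<and> simply_connected X \<and>
     (\<exists>F :: (real^2) set set. finite F \<and> (\<forall>s\<in>F. \<exists>a b. s = closed_segment a b) \<and> X homeomorphic \<Union>F)"

end

theory Submission
  imports Defs
begin

lemma attach:
  fixes a :: "real \<Rightarrow> 'a::euclidean_space"
  assumes X: "simply_connected X" "compact X" and a: "arc a" and s: "0 \<le> s" "s \<le> 1"
    and iff: "\<And>t. t\<in>{0..1} \<Longrightarrow> a t \<in> X \<longleftrightarrow> t \<le> s"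
  shows "simply_connected (X \<union> path_image a)"
proof -
  obtain h where hom: "homeomorphism {0..1} (path_image a) a h" using homeomorphism_arc a by blast
  define A where "A = path_image a"
  define U where "U = X \<union> A"
  have hA: "\<And>x. x \<in> A \<Longrightarrow> h x \<in> {0..1} \<and> a (h x) = x" using hom unfolding homeomorphism_def A_def by auto
  have aA: "\<And>t. t \<in> {0..1} \<Longrightarrow> a t \<in> A \<and> h (a t) = t" using hom unfolding homeomorphism_def A_def by auto
  have ch: "continuous_on A h" and ca: "continuous_on {0..1} a" using hom unfolding homeomorphism_def A_def by auto
  have cA: "compact A" unfolding A_def using a by (simp add: arc_imp_path compact_path_image)
  have XA: "\<And>x. x \<in> A \<Longrightarrow> x \<in> X \<Longrightarrow> h x \<le> s" using hA iff by metis
  define H where "H = (\<lambda>(t::real,x). if x \<in> X then x else a (h x - t * max 0 (h x - s)))"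
  have rng: "\<And>t x. (t::real) \<in> {0..1} \<Longrightarrow> x \<in> A \<Longrightarrow> h x - t * max 0 (h x - s) \<in> {0..1}"
  proof -
    fix t::real and x assume t: "t \<in> {0..1}" and x: "x \<in> A"
    have "t * max 0 (h x - s) \<le> max 0 (h x - s)" using t by (simp add: mult_left_le_one_le)
    moreover have "0 \<le> t * max 0 (h x - s)" using t by simp
    ultimately show "h x - t * max 0 (h x - s) \<in> {0..1}" using hA[OF x] s by (auto simp: max_def split: if_splits)
  qed
  have contH: "continuous_on ({0..1} \<times> U) H"
  proof -
    have e: "{0..1} \<times> U = ({0..1} \<times> X) \<union> ({0..1::real} \<times> A)" unfolding U_def by auto
    have c2: "continuous_on ({0..1::real} \<times> A) (\<lambda>p. a (h (snd p) - fst p * max 0 (h (snd p) - s)))"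
    proof (rule continuous_on_compose2[OF ca])
      show "continuous_on ({0..1} \<times> A) (\<lambda>p. h (snd p) - fst p * max 0 (h (snd p) - s))"
        by (intro continuous_intros continuous_on_compose2[OF ch]) auto
      show "(\<lambda>p. h (snd p) - fst p * max 0 (h (snd p) - s)) ` ({0..1} \<times> A) \<subseteq> {0..1}"
        using rng by auto
    qed
    have "continuous_on (({0..1} \<times> X) \<union> ({0..1::real} \<times> A))
       (\<lambda>p. if snd p \<in> X then snd p else a (h (snd p) - fst p * max 0 (h (snd p) - s)))"
    proof (rule continuous_on_cases)
      show "closed ({0..1::real} \<times> X)" using X by (simp add: closed_Times compact_imp_closed)
      show "closed ({0..1::real} \<times> A)" using cA by (simp add: closed_Times compact_imp_closed)
      show "continuous_on ({0..1::real} \<times> X) snd" by (intro continuous_intros)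
      show "continuous_on ({0..1::real} \<times> A) (\<lambda>p. a (h (snd p) - fst p * max 0 (h (snd p) - s)))" by (rule c2)
      show "\<forall>p. p \<in> {0..1} \<times> X \<and> \<not> snd p \<in> X \<or> p \<in> {0..1} \<times> A \<and> snd p \<in> X \<longrightarrow>
          snd p = a (h (snd p) - fst p * max 0 (h (snd p) - s))"
        using XA hA by auto
    qed
    moreover have "H = (\<lambda>p. if snd p \<in> X then snd p else a (h (snd p) - fst p * max 0 (h (snd p) - s)))"
      unfolding H_def by auto
    ultimately show ?thesis using e by simp
  qed
  have imH: "H ` ({0..1} \<times> U) \<subseteq> U"
    using rng aA unfolding H_def U_def by auto
  define r where "r = H \<circ> Pair 1"
  have "homotopic_with_canon (\<lambda>x. True) U U id r"
  proof (subst homotopic_with, simp, rule exI[of _ H], intro conjI ballI)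
    show "continuous_map (prod_topology (top_of_set {0..1}) (top_of_set U)) (top_of_set U) H"
      using contH imH by (auto simp: continuous_map_subtopology_eu subtopology_Times[symmetric])
    fix x assume "x \<in> topspace (top_of_set U)"
    then have "x \<in> U" by simp
    then show "H (0, x) = id x" using hA unfolding H_def U_def by auto
    show "H (1, x) = r x" by (simp add: r_def)
  qed auto
  moreover have "retraction U X r"
    unfolding retraction_def
  proof (intro conjI)
    show "X \<subseteq> U" unfolding U_def by auto
    show "continuous_on U r" unfolding r_def by (rule continuous_on_o_Pair[OF contH]) auto
    show "r \<in> U \<rightarrow> X"
    proof
      fix x assume x: "x \<in> U"
      show "r x \<in> X"
      proof (cases "x \<in> X")
        case False
        then have xA: "x \<in> A" using x U_def by auto
        have "h x - 1 * max 0 (h x - s) = min (h x) s" by (auto simp: max_def min_def)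
        moreover have "min (h x) s \<in> {0..1}" using hA[OF xA] s by auto
        ultimately show ?thesis using False iff unfolding r_def H_def by auto
      qed (simp add: r_def H_def)
    qed
    show "\<forall>x\<in>X. r x = x" by (simp add: r_def H_def)
  qed
  ultimately have "U homotopy_eqv X" by (rule deformation_retract_imp_homotopy_eqv)
  then show ?thesis using X homotopy_eqv_simple_connectedness unfolding U_def A_def by blast
qed

lemma pathstart_poly: "ps \<noteq> [] \<Longrightarrow> pathstart (polygonal_path ps) = hd ps"
  by (induction ps rule: polygonal_path.induct) (auto simp: pathstart_join)

lemma poly_segs: "\<exists>F. finite F \<and> (\<forall>s\<in>F. \<exists>a b. s = closed_segment a b) \<and> path_image (polygonal_path ps) = \<Union>F"
proof (induction ps rule: polygonal_path.induct)
  case 1 show ?case by (rule exI[of _ "{closed_segment 0 0}"]) (auto, metis closed_segment_idem)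
next
  case (2 a) show ?case by (rule exI[of _ "{closed_segment a a}"]) (auto, metis closed_segment_idem)
next
  case (3 a b) show ?case by (rule exI[of _ "{closed_segment a b}"]) auto
next
  case (4 a b c xs)
  then obtain F where F: "finite F" "\<forall>s\<in>F. \<exists>a b. s = closed_segment a b"
    "path_image (polygonal_path (b # c # xs)) = \<Union>F" by blast
  have "path_image (polygonal_path (a # b # c # xs)) = closed_segment a b \<union> \<Union>F"
    using F(3) pathstart_poly[of "b # c # xs"] by (simp add: path_image_join)
  then show ?case using F by (intro exI[of _ "insert (closed_segment a b) F"]) auto
qed

lemma arc_from:
  assumes "pl_arc_with_endpoint A z"
  obtains a where "arc a" "path_image a = A" "a 0 = z"
proof -
  obtain g where g: "arc g" "path_image g = A" "z \<in> {pathstart g, pathfinish g}"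
    using assms unfolding pl_arc_with_endpoint_def pl_arc_path_def by blast
  show ?thesis
  proof (cases "z = pathstart g")
    case True then show ?thesis using g that by (auto simp: pathstart_def)
  next
    case False
    then have "z = pathfinish g" using g by auto
    moreover have "reversepath g 0 = pathfinish g" by (simp add: reversepath_def pathfinish_def)
    ultimately show ?thesis using g that[of "reversepath g"]
      by (simp add: arc_reversepath path_image_reversepath)
  qed
qed

theorem mainTheorem8:
  fixes \<alpha> :: "nat \<Rightarrow> (real^2) set" and z :: "real^2" and n :: nat
  assumes "\<And>i. i \<in> {1..n} \<Longrightarrow> pl_arc_with_endpoint (\<alpha> i) z"
    and "\<And>i j. i \<in> {1..n} \<Longrightarrow> j \<in> {1..n} \<Longrightarrow> connected (\<alpha> i \<inter> \<alpha> j)"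
  shows "is_tree (\<Union>i\<in>{1..n}. \<alpha> i)"
proof -
  have arcs: "\<exists>a. arc a \<and> path_image a = \<alpha> i \<and> a 0 = z" if "i \<in> {1..n}" for i
    using arc_from[OF assms(1)[OF that]] by metis
  have cpt: "compact (\<alpha> i)" if "i \<in> {1..n}" for i
    using arcs[OF that] by (metis arc_imp_path compact_path_image)
  have zin: "z \<in> \<alpha> i" if "i \<in> {1..n}" for i
    using arcs[OF that] by (metis atLeastAtMost_iff pathstart_def pathstart_in_path_image zero_le_one)
  have "\<forall>i\<in>{1..n}. \<exists>F. finite F \<and> (\<forall>s\<in>F. \<exists>a b. s = closed_segment a b) \<and> \<alpha> i = \<Union>F"
  proof
    fix i assume i: "i \<in> {1..n}"
    obtain g where "pl_arc_path g" "path_image g = \<alpha> i"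
      using assms(1)[OF i] unfolding pl_arc_with_endpoint_def by blast
    then obtain ps where "g = polygonal_path ps" "path_image g = \<alpha> i"
      unfolding pl_arc_path_def by blast
    then show "\<exists>F. finite F \<and> (\<forall>s\<in>F. \<exists>a b. s = closed_segment a b) \<and> \<alpha> i = \<Union>F"
      using poly_segs[of ps] by metis
  qed
  then obtain Fs where Fs: "\<And>i. i \<in> {1..n} \<Longrightarrow> finite (Fs i) \<and> (\<forall>s\<in>Fs i. \<exists>a b. s = closed_segment a b) \<and> \<alpha> i = \<Union>(Fs i)"
    by metis
  have seg: "\<exists>F :: (real^2) set set. finite F \<and> (\<forall>s\<in>F. \<exists>a b. s = closed_segment a b) \<and> (\<Union>i\<in>{1..n}. \<alpha> i) homeomorphic \<Union>F"
  proof (intro exI[of _ "\<Union>(Fs ` {1..n})"] conjI)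
    show "finite (\<Union>(Fs ` {1..n}))" using Fs by auto
    show "\<forall>s\<in>\<Union>(Fs ` {1..n}). \<exists>a b. s = closed_segment a b" using Fs by blast
    have "(\<Union>i\<in>{1..n}. \<alpha> i) = \<Union>(\<Union>(Fs ` {1..n}))" using Fs by auto
    then show "(\<Union>i\<in>{1..n}. \<alpha> i) homeomorphic \<Union>(\<Union>(Fs ` {1..n}))" by (simp add: homeomorphic_refl)
  qed
  have con: "connected (\<Union>i\<in>{1..n}. \<alpha> i)"
  proof (cases "n = 0")
    case True then show ?thesis by simp
  next
    case False
    show ?thesis
    proof (rule connected_Union)
      show "\<And>s. s \<in> \<alpha> ` {1..n} \<Longrightarrow> connected s"
        using arcs by (metis imageE path_connected_imp_connected path_connected_path_image arc_imp_path)
      show "\<Inter> (\<alpha> ` {1..n}) \<noteq> {}" using zin by blast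
    qed
  qed
  have "\<forall>k. k \<le> n \<longrightarrow> simply_connected ({z} \<union> (\<Union>i\<in>{1..k}. \<alpha> i))"
  proof (intro allI)
    fix k show "k \<le> n \<longrightarrow> simply_connected ({z} \<union> (\<Union>i\<in>{1..k}. \<alpha> i))"
    proof (induction k)
      case 0 then show ?case by (simp add: convex_imp_simply_connected)
    next
      case (Suc k)
      show ?case
      proof
        assume kn: "Suc k \<le> n"
        define Y where "Y = {z} \<union> (\<Union>i\<in>{1..k}. \<alpha> i)"
        have Ysc: "simply_connected Y" using Suc kn Y_def by simp
        have Ycp: "compact Y" unfolding Y_def using cpt kn
          by (intro compact_Un compact_UN) auto
        have sk: "Suc k \<in> {1..n}" using kn by simp
        obtain a where a: "arc a" "path_image a = \<alpha> (Suc k)" "a 0 = z" using arcs[OF sk] by blast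
        obtain h where hom: "homeomorphism {0..1} (path_image a) a h" using homeomorphism_arc a(1) by blast
        have hA: "\<And>x. x \<in> path_image a \<Longrightarrow> h x \<in> {0..1} \<and> a (h x) = x" using hom unfolding homeomorphism_def by auto
        have aA: "\<And>t. t \<in> {0..1} \<Longrightarrow> a t \<in> path_image a \<and> h (a t) = t" using hom unfolding homeomorphism_def by auto
        have ch: "continuous_on (path_image a) h" and ca: "continuous_on {0..1} a" using hom unfolding homeomorphism_def by auto
        define S where "S = {0..1} \<inter> a -` Y"
        have Scp: "compact S"
        proof -
          have "closed S" unfolding S_def using ca Ycp by (intro continuous_closed_preimage) (auto simp: compact_imp_closed)
          then have "compact (S \<inter> {0..1})" by blast
          moreover have "S \<inter> {0..1} = S" unfolding S_def by auto
          ultimately show ?thesis by simp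
        qed
        have S0: "0 \<in> S" unfolding S_def Y_def using a by auto
        have Sb: "\<And>t. t \<in> S \<Longrightarrow> t \<in> {0..1}" unfolding S_def by auto
        have down: "u \<in> S" if t: "t \<in> S" and u: "0 \<le> u" "u \<le> t" for t u
        proof -
          have t01: "t \<in> {0..1}" "a t \<in> Y" using t unfolding S_def by auto
          show ?thesis
          proof (cases "a t = z")
            case True
            then have "t = 0" using a(1) t01 a(3) unfolding arc_def inj_on_def by force
            then show ?thesis using u S0 by simp
          next
            case False
            then obtain i where i: "i \<in> {1..k}" "a t \<in> \<alpha> i" using t01 unfolding Y_def by auto
            have i': "i \<in> {1..n}" using i kn by auto
            define Si where "Si = h ` (\<alpha> i \<inter> path_image a)"
            have "connected Si" unfolding Si_def
              using assms(2)[OF i' sk] a(2) by (intro connected_continuous_image continuous_on_subset[OF ch]) auto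
            moreover have "0 \<in> Si" unfolding Si_def using zin[OF i'] a aA[of 0]
              by (metis IntI atLeastAtMost_iff image_eqI order_refl zero_le_one)
            moreover have "t \<in> Si" unfolding Si_def using aA[OF t01(1)] i(2) by force
            ultimately have "u \<in> Si" using u connected_iff_interval by blast
            then obtain x where x: "x \<in> \<alpha> i" "x \<in> path_image a" "u = h x" unfolding Si_def by auto
            then have "a u = x" "u \<in> {0..1}" using hA by auto
            then show ?thesis unfolding S_def Y_def using x i by auto
          qed
        qed
        define s where "s = Sup S"
        have bdd: "bdd_above S" using Sb by (auto intro: bdd_aboveI[of _ 1])
        have sS: "s \<in> S" unfolding s_def using Scp S0 by (auto intro: closed_contains_Sup compact_imp_closed bdd)
        have s01: "0 \<le> s" "s \<le> 1" using sS Sb by auto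
        have iff: "a t \<in> Y \<longleftrightarrow> t \<le> s" if "t \<in> {0..1}" for t
        proof
          assume "a t \<in> Y" then have "t \<in> S" using that S_def by auto
          then show "t \<le> s" unfolding s_def using bdd by (rule cSup_upper)
        next
          assume "t \<le> s" then have "t \<in> S" using down[OF sS] that by auto
          then show "a t \<in> Y" unfolding S_def by auto
        qed
        have "simply_connected (Y \<union> path_image a)"
          by (rule attach[OF Ysc Ycp a(1) s01 iff])
        moreover have "Y \<union> path_image a = {z} \<union> (\<Union>i\<in>{1..Suc k}. \<alpha> i)"
          unfolding Y_def a(2) by (auto simp: atLeastAtMostSuc_conv)
        ultimately show "simply_connected ({z} \<union> (\<Union>i\<in>{1..Suc k}. \<alpha> i))" by simp
      qed
    qed
  qed
  then have sc0: "simply_connected ({z} \<union> (\<Union>i\<in>{1..n}. \<alpha> i))" by simp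
  have sc: "simply_connected (\<Union>i\<in>{1..n}. \<alpha> i)"
  proof (cases "n = 0")
    case True then show ?thesis by simp
  next
    case False
    then have "1 \<in> {1..n}" by simp
    then have "{z} \<union> (\<Union>i\<in>{1..n}. \<alpha> i) = (\<Union>i\<in>{1..n}. \<alpha> i)" using zin by blast
    then show ?thesis using sc0 by simp
  qed
  show ?thesis unfolding is_tree_def using con sc seg by blast
qed

end
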